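(* Let $R=K[x_1,\ldots,x_n,x_{n+1}]$ over a field $K$, let $I\subset R$ be a monomial ideal with $\gcd(u,x_{n+1})=1$ for all $u\in\mathcal{G}(I)$, and let $\mathfrak{m}=(x_1,\ldots,x_{n+1})$. Let $h=fg$ where $f\neq1$ is a monomial of $R$, $g\in\mathcal{G}(I)$, and $\gcd(h,x_{n+1})=1$, and set $L:=x_{n+1}I+hR$. If $(x_1,\ldots,x_n)\in\mathrm{Ass}(R/I^t)$ for some $t\geq1$, then $\mathfrak{m}\in\mathrm{Ass}(R/L^{t+1})$.
   Context: $\mathcal{G}(I)$ denotes the unique minimal set of monomial generators of a monomial ideal $I$. *)

theory Defs
  imports "HOL-Library.Poly_Mapping"
begin

text \<open>Polynomials over a field 'k in variables x_1, x_2, ... : finitely supported maps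
from exponent vectors (nat \<Rightarrow>0 nat) to coefficients, with convolution product.
The ring R = K[x_1,...,x_{n+1}] is the subring of polynomials whose monomials
only involve the variables x_1, ..., x_{n+1}.\<close>

type_synonym 'k mpoly = "(nat \<Rightarrow>\<^sub>0 nat) \<Rightarrow>\<^sub>0 'k"

definition exps :: "nat \<Rightarrow> (nat \<Rightarrow>\<^sub>0 nat) set" where
  "exps N = {a. Poly_Mapping.keys a \<subseteq> {1..N}}"

definition PR :: "nat \<Rightarrow> ('k::field) mpoly set" where
  "PR N = {p. Poly_Mapping.keys p \<subseteq> exps N}"

definition mon :: "(nat \<Rightarrow>\<^sub>0 nat) \<Rightarrow> ('k::field) mpoly" where
  "mon a = Poly_Mapping.single a 1"

definition Var :: "nat \<Rightarrow> ('k::field) mpoly" where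
  "Var i = mon (Poly_Mapping.single i 1)"

definition monomials :: "nat \<Rightarrow> ('k::field) mpoly set" where
  "monomials N = {mon a | a. a \<in> exps N}"

definition is_ideal :: "nat \<Rightarrow> ('k::field) mpoly set \<Rightarrow> bool" where
  "is_ideal N I \<longleftrightarrow> I \<subseteq> PR N \<and> 0 \<in> I \<and> (\<forall>a\<in>I. \<forall>b\<in>I. a + b \<in> I)
      \<and> (\<forall>r\<in>PR N. \<forall>a\<in>I. r * a \<in> I)"

definition gen :: "nat \<Rightarrow> ('k::field) mpoly set \<Rightarrow> 'k mpoly set" where
  "gen N S = \<Inter> {I. is_ideal N I \<and> S \<subseteq> I}"

definition monomial_ideal :: "nat \<Rightarrow> ('k::field) mpoly set \<Rightarrow> bool" where
  "monomial_ideal N I \<longleftrightarrow> is_ideal N I \<and> I = gen N (I \<inter> monomials N)"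

definition mon_dvd :: "(nat \<Rightarrow>\<^sub>0 nat) \<Rightarrow> (nat \<Rightarrow>\<^sub>0 nat) \<Rightarrow> bool" where
  "mon_dvd a b \<longleftrightarrow> (\<forall>i. Poly_Mapping.lookup a i \<le> Poly_Mapping.lookup b i)"

definition mon_coprime :: "(nat \<Rightarrow>\<^sub>0 nat) \<Rightarrow> (nat \<Rightarrow>\<^sub>0 nat) \<Rightarrow> bool" where
  "mon_coprime a b \<longleftrightarrow> (\<forall>i. min (Poly_Mapping.lookup a i) (Poly_Mapping.lookup b i) = 0)"

definition mingens :: "nat \<Rightarrow> ('k::field) mpoly set \<Rightarrow> 'k mpoly set" where
  "mingens N I = {mon a | a. a \<in> exps N \<and> mon a \<in> I \<and>
      (\<forall>b\<in>exps N. mon b \<in> I \<longrightarrow> mon_dvd b a \<longrightarrow> b = a)}"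

definition ideal_prod :: "nat \<Rightarrow> ('k::field) mpoly set \<Rightarrow> 'k mpoly set \<Rightarrow> 'k mpoly set" where
  "ideal_prod N I J = gen N {a * b | a b. a \<in> I \<and> b \<in> J}"

fun ideal_pow :: "nat \<Rightarrow> ('k::field) mpoly set \<Rightarrow> nat \<Rightarrow> 'k mpoly set" where
  "ideal_pow N I 0 = PR N"
| "ideal_pow N I (Suc t) = ideal_prod N (ideal_pow N I t) I"

definition prime_ideal :: "nat \<Rightarrow> ('k::field) mpoly set \<Rightarrow> bool" where
  "prime_ideal N P \<longleftrightarrow> is_ideal N P \<and> P \<noteq> PR N \<and>
     (\<forall>a\<in>PR N. \<forall>b\<in>PR N. a * b \<in> P \<longrightarrow> a \<in> P \<or> b \<in> P)"

text \<open>Ass(R/J): prime ideals of R of the form (J : r) = Ann(r + J) for some r in R.\<close>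
definition Ass :: "nat \<Rightarrow> ('k::field) mpoly set \<Rightarrow> 'k mpoly set set" where
  "Ass N J = {P. prime_ideal N P \<and> (\<exists>r\<in>PR N. P = {s\<in>PR N. s * r \<in> J})}"

end

theory Submission imports Defs begin

abbreviation lk where "lk \<equiv> Poly_Mapping.lookup"
abbreviation ks where "ks \<equiv> Poly_Mapping.keys"
abbreviation sg where "sg \<equiv> Poly_Mapping.single"

lemma pm_ne: "(x :: 'a \<Rightarrow>\<^sub>0 'b::zero) \<noteq> y \<Longrightarrow> \<exists>i. lk x i \<noteq> lk y i"
proof (rule ccontr)
  assume "x \<noteq> y" "\<not> (\<exists>i. lk x i \<noteq> lk y i)"
  then have "x = y" by (intro poly_mapping_eqI) auto
  with \<open>x \<noteq> y\<close> show False by simp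
qed

lemma exps_add: "a \<in> exps N \<Longrightarrow> b \<in> exps N \<Longrightarrow> a + b \<in> exps N"
  unfolding exps_def using keys_add[of a b] by auto

lemma keys_le: "mon_dvd a b \<Longrightarrow> ks a \<subseteq> ks b"
proof
  fix i assume d: "mon_dvd a b" and "i \<in> ks a"
  then have "lk a i \<noteq> 0" by (simp add: in_keys_iff)
  moreover have "lk a i \<le> lk b i" using d by (simp add: mon_dvd_def)
  ultimately show "i \<in> ks b" by (simp add: in_keys_iff)
qed

lemma exps_le: "mon_dvd a b \<Longrightarrow> b \<in> exps N \<Longrightarrow> a \<in> exps N"
  unfolding exps_def using keys_le by blast

lemma exps_0[simp]: "0 \<in> exps N" by (simp add: exps_def)

lemma mon_mult: "(mon a :: 'k::field mpoly) * mon b = mon (a+b)"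
  by (simp add: mon_def mult_single)

lemma keys_mon[simp]: "ks (mon a :: 'k::field mpoly) = {a}"
  by (simp add: mon_def)

lemma mon_inj: "(mon a :: 'k::field mpoly) = mon b \<Longrightarrow> a = b"
  unfolding mon_def by (metis lookup_single_not_eq one_neq_zero lookup_single_eq)

lemma PR_mult: "p \<in> PR N \<Longrightarrow> q \<in> PR N \<Longrightarrow> p * q \<in> PR N"
  unfolding PR_def using keys_mult[of p q] exps_add by fastforce

lemma PR_add: "p \<in> PR N \<Longrightarrow> q \<in> PR N \<Longrightarrow> p + q \<in> PR N"
  unfolding PR_def using keys_add[of p q] by fastforce

lemma PR_mon: "a \<in> exps N \<Longrightarrow> (mon a :: 'k::field mpoly) \<in> PR N"
  by (simp add: PR_def)

lemma PR_1: "(1 :: 'k::field mpoly) \<in> PR N"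
  by (simp add: PR_def)

lemma PR_0: "(0 :: 'k::field mpoly) \<in> PR N"
  by (simp add: PR_def)

lemma PR_const: "(sg 0 c :: 'k::field mpoly) \<in> PR N"
  by (simp add: PR_def)

lemma is_ideal_PR: "is_ideal N (PR N)"
  unfolding is_ideal_def using PR_mult PR_add PR_0 by blast


lemma gen_sub: "S \<subseteq> gen N S"
  unfolding gen_def by blast

lemma gen_min: "is_ideal N J \<Longrightarrow> S \<subseteq> J \<Longrightarrow> gen N S \<subseteq> J"
  unfolding gen_def by blast

lemma ideal_PR: "is_ideal N J \<Longrightarrow> J \<subseteq> PR N"
  by (simp add: is_ideal_def)

lemma ideal_multL: "is_ideal N J \<Longrightarrow> r \<in> PR N \<Longrightarrow> a \<in> J \<Longrightarrow> r * a \<in> J"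
  by (simp add: is_ideal_def)

lemma ideal_multR: "is_ideal N J \<Longrightarrow> r \<in> PR N \<Longrightarrow> a \<in> J \<Longrightarrow> a * r \<in> J"
  unfolding is_ideal_def by (metis mult.commute)

lemma ideal_add: "is_ideal N J \<Longrightarrow> a \<in> J \<Longrightarrow> b \<in> J \<Longrightarrow> a + b \<in> J"
  by (simp add: is_ideal_def)

lemma ideal_0: "is_ideal N J \<Longrightarrow> 0 \<in> J"
  by (simp add: is_ideal_def)

lemma gen_ideal: assumes "S \<subseteq> PR N" shows "is_ideal N (gen N S)"
proof -
  have mem: "x \<in> gen N S \<longleftrightarrow> (\<forall>I. is_ideal N I \<and> S \<subseteq> I \<longrightarrow> x \<in> I)" for x
    by (auto simp: gen_def)
  have PRF: "is_ideal N (PR N) \<and> S \<subseteq> PR N" using is_ideal_PR assms by blast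
  have 1: "gen N S \<subseteq> PR N" using mem PRF by blast
  have 2: "0 \<in> gen N S" using mem ideal_0 by blast
  have 3: "a + b \<in> gen N S" if "a \<in> gen N S" "b \<in> gen N S" for a b
    using that mem ideal_add by metis
  have 4: "r * a \<in> gen N S" if "r \<in> PR N" "a \<in> gen N S" for r a
    using that mem ideal_multL by metis
  show ?thesis unfolding is_ideal_def using 1 2 3 4 by blast
qed

lemma ideal_pow_ideal: "is_ideal N I \<Longrightarrow> is_ideal N (ideal_pow N I k)"
proof (induction k)
  case 0 then show ?case by (simp add: is_ideal_PR)
next
  case (Suc k)
  show ?case unfolding ideal_pow.simps ideal_prod_def
    apply (rule gen_ideal)
    using ideal_PR[OF Suc.IH[OF Suc.prems]] ideal_PR[OF Suc.prems] PR_mult by blast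
qed

lemma pow_prod: "a \<in> ideal_pow N I k \<Longrightarrow> b \<in> I \<Longrightarrow> a * b \<in> ideal_pow N I (Suc k)"
  unfolding ideal_pow.simps ideal_prod_def by (rule subsetD[OF gen_sub]) blast

lemma ideal_sum: assumes "is_ideal N J" "finite A" "\<forall>x\<in>A. f x \<in> J" shows "sum f A \<in> J"
  using assms(2,3) by (induction A rule: finite_induct) (auto simp: ideal_0[OF assms(1)] ideal_add[OF assms(1)])

lemma poly_decomp: "(p :: 'k::field mpoly) = (\<Sum>\<alpha>\<in>ks p. sg \<alpha> (lk p \<alpha>))"
  by (rule poly_mapping_eqI) (auto simp: lookup_sum lookup_single when_def in_keys_iff)

lemma single_eq: "(sg \<alpha> c :: 'k::field mpoly) = sg 0 c * mon \<alpha>"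
  by (simp add: mon_def mult_single)

lemma ideal_from_keys:
  assumes "is_ideal N J" "(\<forall>\<alpha>\<in>ks p. (mon \<alpha> :: 'k::field mpoly) \<in> J)"
  shows "p \<in> J"
proof -
  have "(\<Sum>\<alpha>\<in>ks p. sg \<alpha> (lk p \<alpha>)) \<in> J"
    apply (rule ideal_sum[OF assms(1)]) apply simp
    using assms ideal_multL[OF assms(1) PR_const] single_eq by metis
  then show ?thesis using poly_decomp[of p] by simp
qed

lemma dvd_decomp: "mon_dvd \<alpha> \<beta> \<Longrightarrow> \<beta> = (\<beta> - \<alpha>) + \<alpha>"
  by (rule poly_mapping_eqI) (auto simp: lookup_add lookup_minus mon_dvd_def)

lemma minus_exps: "\<beta> \<in> exps N \<Longrightarrow> \<beta> - \<alpha> \<in> exps N"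
  by (rule exps_le[of _ \<beta>]) (auto simp: mon_dvd_def lookup_minus)

lemma upward: "is_ideal N J \<Longrightarrow> (mon \<alpha> :: 'k::field mpoly) \<in> J \<Longrightarrow> \<beta> \<in> exps N \<Longrightarrow> mon_dvd \<alpha> \<beta>
   \<Longrightarrow> (mon \<beta> :: 'k mpoly) \<in> J"
proof -
  assume ii: "is_ideal N J" and a: "(mon \<alpha> :: 'k::field mpoly) \<in> J" and b: "\<beta> \<in> exps N" and d: "mon_dvd \<alpha> \<beta>"
  have eq: "(\<beta> - \<alpha>) + \<alpha> = \<beta>" using dvd_decomp[OF d] by simp
  have "(mon (\<beta> - \<alpha>) :: 'k mpoly) * mon \<alpha> \<in> J" by (rule ideal_multL[OF ii PR_mon[OF minus_exps[OF b]] a])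
  then show "(mon \<beta> :: 'k mpoly) \<in> J" by (simp only: mon_mult eq)
qed

definition IdealE :: "(nat \<Rightarrow>\<^sub>0 nat) set \<Rightarrow> 'k::field mpoly set" where
  "IdealE E = {p. ks p \<subseteq> E}"

lemma IdealE_iff: "p \<in> IdealE E \<longleftrightarrow> ks p \<subseteq> E"
  by (simp add: IdealE_def)

lemma IdealE_ideal:
  assumes "E \<subseteq> exps N" "\<And>\<alpha> \<beta>. \<alpha> \<in> E \<Longrightarrow> \<beta> \<in> exps N \<Longrightarrow> mon_dvd \<alpha> \<beta> \<Longrightarrow> \<beta> \<in> E"
  shows "is_ideal N (IdealE E :: 'k::field mpoly set)"
  unfolding is_ideal_def
proof (intro conjI ballI)
  show "IdealE E \<subseteq> PR N" using assms(1) by (auto simp: IdealE_def PR_def)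
  show "0 \<in> (IdealE E :: 'k mpoly set)" by (simp add: IdealE_def)
  fix a b :: "'k mpoly" assume "a \<in> IdealE E" "b \<in> IdealE E"
  then show "a + b \<in> IdealE E" using keys_add[of a b] by (auto simp: IdealE_def)
next
  fix r a :: "'k mpoly" assume r: "r \<in> PR N" and a: "a \<in> IdealE E"
  have "x + y \<in> E" if "x \<in> ks r" "y \<in> ks a" for x y
  proof -
    have xe: "x \<in> exps N" and ye: "y \<in> E" using r a that by (auto simp: PR_def IdealE_def)
    have "mon_dvd y (x + y)" by (simp add: mon_dvd_def lookup_add)
    moreover have "x + y \<in> exps N" using exps_add xe ye assms(1) by blast
    ultimately show ?thesis using assms(2) ye by blast
  qed
  then show "r * a \<in> IdealE E" using keys_mult[of r a] by (auto simp: IdealE_def)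
qed


definition zz :: "nat \<Rightarrow> (nat \<Rightarrow>\<^sub>0 nat) \<Rightarrow> (nat \<Rightarrow>\<^sub>0 nat)" where
  "zz e \<gamma> = \<gamma> - sg e (lk \<gamma> e)"

lemma lk_zz: "lk (zz e \<gamma>) i = (if i = e then 0 else lk \<gamma> i)"
  by (simp add: zz_def lookup_minus lookup_single when_def)

lemma zz_exps: "\<gamma> \<in> exps N \<Longrightarrow> zz e \<gamma> \<in> exps N"
  by (simp add: zz_def minus_exps)

lemma mon_dvd_trans: "mon_dvd a b \<Longrightarrow> mon_dvd b c \<Longrightarrow> mon_dvd a c"
  unfolding mon_dvd_def using order_trans by blast

definition dsum :: "(nat \<Rightarrow>\<^sub>0 nat) \<Rightarrow> nat" where
  "dsum c = sum (lk c) (ks c)"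

lemma dsum_strict: assumes "mon_dvd b c" "b \<noteq> c" shows "dsum b < dsum c"
proof -
  have sub: "ks b \<subseteq> ks c" using assms(1) by (rule keys_le)
  have "dsum b = sum (lk b) (ks c)" unfolding dsum_def
    by (rule sum.mono_neutral_left) (use sub in \<open>auto simp: in_keys_iff\<close>)
  moreover obtain i where i: "lk b i \<noteq> lk c i" using pm_ne[OF assms(2)] by blast
  then have lt: "lk b i < lk c i" using assms(1) unfolding mon_dvd_def by (meson le_neq_trans)
  then have ic: "i \<in> ks c" by (simp add: in_keys_iff)
  have le: "\<forall>x\<in>ks c. lk b x \<le> lk c x" using assms(1) by (simp add: mon_dvd_def)
  have "sum (lk b) (ks c) < sum (lk c) (ks c)"
    by (rule sum_strict_mono_ex1[OF finite_keys le]) (use ic lt in blast)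
  ultimately show ?thesis unfolding dsum_def by simp
qed

lemma sat_I:
  fixes I :: "'k::field mpoly set"
  assumes mi: "is_ideal N I"
    and hyp: "\<forall>c. mon c \<in> (mingens N I :: 'k mpoly set) \<longrightarrow> mon_coprime c (sg e 1)"
    and d: "(mon \<delta> :: 'k mpoly) \<in> I" "\<delta> \<in> exps N"
  shows "(mon (zz e \<delta>) :: 'k mpoly) \<in> I"
proof -
  define A where "A = {c \<in> exps N. (mon c :: 'k mpoly) \<in> I \<and> mon_dvd c \<delta>}"
  have "\<delta> \<in> A" using d by (simp add: A_def mon_dvd_def)
  then obtain c where c: "c \<in> A" and cmin: "\<forall>y. y \<in> A \<longrightarrow> dsum c \<le> dsum y"
    using ex_has_least_nat[of "\<lambda>c. c \<in> A" \<delta> dsum] by blast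
  have "(mon c :: 'k mpoly) \<in> mingens N I"
    unfolding mingens_def
  proof (intro CollectI exI conjI ballI impI)
    show "c \<in> exps N" "(mon c :: 'k mpoly) \<in> I" using c by (auto simp: A_def)
    fix b assume b: "b \<in> exps N" "(mon b :: 'k mpoly) \<in> I" "mon_dvd b c"
    then have "b \<in> A" using c mon_dvd_trans by (auto simp: A_def)
    then show "b = c" using cmin dsum_strict[OF b(3)] by force
  qed simp
  then have "mon_coprime c (sg e 1)" using hyp by blast
  then have "min (lk c e) 1 = 0" unfolding mon_coprime_def
    by (metis lookup_single_eq)
  then have ce: "lk c e = 0" by (simp add: min_def split: if_splits)
  have "mon_dvd c (zz e \<delta>)" using c ce unfolding A_def mon_dvd_def by (auto simp: lk_zz)
  then show ?thesis using upward[OF mi _ zz_exps[OF d(2)]] c by (auto simp: A_def)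
qed

lemma I_keys:
  fixes I :: "'k::field mpoly set"
  assumes mi: "monomial_ideal N I" and p: "p \<in> I" and a: "\<alpha> \<in> ks p"
  shows "(mon \<alpha> :: 'k mpoly) \<in> I \<and> \<alpha> \<in> exps N"
proof -
  have ii: "is_ideal N I" using mi by (simp add: monomial_ideal_def)
  let ?E = "{\<alpha> \<in> exps N. (mon \<alpha> :: 'k mpoly) \<in> I}"
  have "is_ideal N (IdealE ?E :: 'k mpoly set)"
    by (rule IdealE_ideal) (auto intro: upward[OF ii])
  moreover have "I \<inter> monomials N \<subseteq> IdealE ?E"
    by (auto simp: monomials_def IdealE_def)
  ultimately have "gen N (I \<inter> monomials N) \<subseteq> IdealE ?E" by (rule gen_min)
  then have "I \<subseteq> IdealE ?E" using mi by (simp add: monomial_ideal_def)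
  then show ?thesis using p a by (auto simp: IdealE_def)
qed

lemma mon_0: "(mon 0 :: 'k::field mpoly) = 1"
  by (simp add: mon_def)

lemma pow_S:
  fixes I :: "'k::field mpoly set"
  assumes mi: "monomial_ideal N I"
    and hyp: "\<forall>c. mon c \<in> (mingens N I :: 'k mpoly set) \<longrightarrow> mon_coprime c (sg e 1)"
  shows "ideal_pow N I j \<subseteq> IdealE {\<delta> \<in> exps N. \<exists>u. (mon u :: 'k mpoly) \<in> ideal_pow N I j \<and> lk u e = 0 \<and> mon_dvd u \<delta>}"
proof (induction j)
  case 0
  show ?case
  proof
    fix p :: "'k mpoly" assume "p \<in> ideal_pow N I 0"
    then have "ks p \<subseteq> exps N" by (simp add: PR_def)
    moreover have "(mon 0 :: 'k mpoly) \<in> ideal_pow N I 0" by (simp add: mon_0 PR_1)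
    ultimately show "p \<in> IdealE {\<delta> \<in> exps N. \<exists>u. (mon u :: 'k mpoly) \<in> ideal_pow N I 0 \<and> lk u e = 0 \<and> mon_dvd u \<delta>}"
      unfolding IdealE_def mon_dvd_def by force
  qed
next
  case (Suc j)
  have ii: "is_ideal N I" using mi by (simp add: monomial_ideal_def)
  let ?S = "{\<delta> \<in> exps N. \<exists>u. (mon u :: 'k mpoly) \<in> ideal_pow N I (Suc j) \<and> lk u e = 0 \<and> mon_dvd u \<delta>}"
  have "is_ideal N (IdealE ?S :: 'k mpoly set)"
    by (rule IdealE_ideal) (auto intro: mon_dvd_trans)
  moreover have "{p * q |p q. p \<in> ideal_pow N I j \<and> q \<in> I} \<subseteq> IdealE ?S"
  proof (safe)
    fix p q :: "'k mpoly" assume p: "p \<in> ideal_pow N I j" and q: "q \<in> I"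
    show "p * q \<in> IdealE ?S" unfolding IdealE_iff
    proof
      fix x assume "x \<in> ks (p * q)"
      then obtain \<alpha> \<beta> where x: "x = \<alpha> + \<beta>" and ab: "\<alpha> \<in> ks p" "\<beta> \<in> ks q"
        using keys_mult[of p q] by blast
      obtain u where u: "(mon u :: 'k mpoly) \<in> ideal_pow N I j" "lk u e = 0" "mon_dvd u \<alpha>" "\<alpha> \<in> exps N"
        using Suc.IH p ab(1) by (auto simp: IdealE_def)
      have b: "(mon \<beta> :: 'k mpoly) \<in> I" "\<beta> \<in> exps N" using I_keys[OF mi q ab(2)] by auto
      have zb: "(mon (zz e \<beta>) :: 'k mpoly) \<in> I" by (rule sat_I[OF ii hyp b])
      have "(mon (u + zz e \<beta>) :: 'k mpoly) \<in> ideal_pow N I (Suc j)"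
        using pow_prod[OF u(1) zb] by (simp add: mon_mult)
      moreover have "lk (u + zz e \<beta>) e = 0" using u by (simp add: lookup_add lk_zz)
      moreover have "mon_dvd (u + zz e \<beta>) x" using u(3) unfolding x mon_dvd_def
        by (auto simp: lookup_add lk_zz add_mono)
      moreover have "x \<in> exps N" using x exps_add u(4) b(2) by blast
      ultimately show "x \<in> ?S" by blast
    qed
  qed
  ultimately show ?case unfolding ideal_pow.simps ideal_prod_def by (rule gen_min)
qed


lemma pow1: "is_ideal N I \<Longrightarrow> ideal_pow N I 1 = I"
proof
  assume ii: "is_ideal N I"
  show "ideal_pow N I 1 \<subseteq> I"
    unfolding One_nat_def ideal_pow.simps ideal_prod_def
    by (rule gen_min[OF ii]) (use ii in \<open>auto simp: is_ideal_def\<close>)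
  show "I \<subseteq> ideal_pow N I 1"
  proof
    fix q assume "q \<in> I"
    then have "1 * q \<in> ideal_pow N I (Suc 0)" by (intro pow_prod) (auto simp: PR_1)
    then show "q \<in> ideal_pow N I 1" by simp
  qed
qed

lemma Var_mon: "Var e = mon (sg e 1)" by (simp add: Var_def)

lemma sg_exps: "e \<in> {1..N} \<Longrightarrow> sg e k \<in> exps N"
  by (simp add: exps_def)

definition FF :: "nat \<Rightarrow> 'k::field mpoly set \<Rightarrow> nat \<Rightarrow> (nat \<Rightarrow>\<^sub>0 nat) \<Rightarrow> nat \<Rightarrow> (nat \<Rightarrow>\<^sub>0 nat) set" where
  "FF N I e hb j = {\<delta> \<in> exps N. \<exists>k\<le>j. \<exists>u. (mon u :: 'k mpoly) \<in> ideal_pow N I k \<and> lk u e = 0 \<and>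
      (\<forall>i. (if i = e then k else 0) + lk u i + (j-k) * lk hb i \<le> lk \<delta> i)}"

lemma FF_up:
  fixes I :: "'k::field mpoly set"
  assumes a: "\<alpha> \<in> FF N I e hb j" and b: "\<beta> \<in> exps N" and d: "mon_dvd \<alpha> \<beta>"
  shows "\<beta> \<in> FF N I e hb j"
proof -
  from a obtain k u where k: "k \<le> j" "(mon u :: 'k mpoly) \<in> ideal_pow N I k" "lk u e = 0"
    and c: "\<forall>i. (if i = e then k else 0) + lk u i + (j-k) * lk hb i \<le> lk \<alpha> i"
    unfolding FF_def by blast
  have "\<forall>i. (if i = e then k else 0) + lk u i + (j-k) * lk hb i \<le> lk \<beta> i"
    using c d order_trans unfolding mon_dvd_def by blast
  then show ?thesis unfolding FF_def using k b by blast
qed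

lemma FF_ideal: "is_ideal N (IdealE (FF N I e hb j) :: 'k::field mpoly set)"
  apply (rule IdealE_ideal)
   apply (simp add: FF_def; blast)
  by (rule FF_up)

lemma L_F1:
  fixes I :: "'k::field mpoly set"
  assumes mi: "monomial_ideal N I"
    and hyp: "\<forall>c. mon c \<in> (mingens N I :: 'k mpoly set) \<longrightarrow> mon_coprime c (sg e 1)"
    and e: "e \<in> {1..N}" and hb: "hb \<in> exps N"
  shows "gen N ((\<lambda>u. Var e * u) ` I \<union> {mon hb}) \<subseteq> IdealE (FF N I e hb 1)"
proof (rule gen_min[OF FF_ideal], safe)
  have ii: "is_ideal N I" using mi by (simp add: monomial_ideal_def)
  fix p :: "'k mpoly" assume p: "p \<in> I"
  show "Var e * p \<in> IdealE (FF N I e hb 1)" unfolding IdealE_iff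
  proof
    fix x assume "x \<in> ks (Var e * p)"
    then obtain y where x: "x = sg e 1 + y" and y: "y \<in> ks p"
      using keys_mult[of "Var e" p] by (auto simp: Var_mon)
    have yI: "(mon y :: 'k mpoly) \<in> I" "y \<in> exps N" using I_keys[OF mi p y] by auto
    have "(mon (zz e y) :: 'k mpoly) \<in> I" by (rule sat_I[OF ii hyp yI])
    then have "1 * (mon (zz e y) :: 'k mpoly) \<in> ideal_pow N I (Suc 0)" by (intro pow_prod) (auto simp: PR_1)
    then have m1: "(mon (zz e y) :: 'k mpoly) \<in> ideal_pow N I 1" by simp
    have "x \<in> exps N" using x exps_add sg_exps[OF e] yI(2) by blast
    moreover have "\<forall>i. (if i = e then 1 else 0) + lk (zz e y) i + (1-1) * lk hb i \<le> lk x i"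
      by (auto simp: x lk_zz lookup_add lookup_single when_def)
    moreover have "lk (zz e y) e = 0" by (simp add: lk_zz)
    ultimately show "x \<in> FF N I e hb 1" unfolding FF_def using m1 by blast
  qed
next
  have "(mon 0 :: 'k mpoly) \<in> ideal_pow N I 0" by (simp add: mon_0 PR_1)
  then have "hb \<in> FF N I e hb 1" unfolding FF_def using hb by force
  then show "(mon hb :: 'k mpoly) \<in> IdealE (FF N I e hb 1)" by (simp add: IdealE_def)
qed

lemma L_pow_F:
  fixes I :: "'k::field mpoly set"
  assumes mi: "monomial_ideal N I"
    and hyp: "\<forall>c. mon c \<in> (mingens N I :: 'k mpoly set) \<longrightarrow> mon_coprime c (sg e 1)"
    and e: "e \<in> {1..N}" and hb: "hb \<in> exps N"
  shows "ideal_pow N (gen N ((\<lambda>u. Var e * u) ` I \<union> {mon hb})) j \<subseteq> IdealE (FF N I e hb j)"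
proof (induction j)
  case 0
  have "(mon 0 :: 'k mpoly) \<in> ideal_pow N I 0" by (simp add: mon_0 PR_1)
  then have "exps N \<subseteq> FF N I e hb 0" unfolding FF_def by force
  then show ?case by (auto simp: IdealE_def PR_def)
next
  case (Suc j)
  have ii: "is_ideal N I" using mi by (simp add: monomial_ideal_def)
  let ?L = "gen N ((\<lambda>u. Var e * u) ` I \<union> {mon hb})"
  have "{p * q |p q. p \<in> ideal_pow N ?L j \<and> q \<in> ?L} \<subseteq> IdealE (FF N I e hb (Suc j))"
  proof safe
    fix p q :: "'k mpoly" assume p: "p \<in> ideal_pow N ?L j" and q: "q \<in> ?L"
    show "p * q \<in> IdealE (FF N I e hb (Suc j))" unfolding IdealE_iff
    proof
      fix x assume "x \<in> ks (p * q)"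
      then obtain \<alpha> \<beta> where x: "x = \<alpha> + \<beta>" and ab: "\<alpha> \<in> ks p" "\<beta> \<in> ks q"
        using keys_mult[of p q] by blast
      have "\<alpha> \<in> FF N I e hb j" using Suc.IH p ab(1) by (auto simp: IdealE_def)
      then obtain k1 u1 where a: "\<alpha> \<in> exps N" "k1 \<le> j" "(mon u1 :: 'k mpoly) \<in> ideal_pow N I k1" "lk u1 e = 0"
         "\<forall>i. (if i = e then k1 else 0) + lk u1 i + (j-k1) * lk hb i \<le> lk \<alpha> i"
        unfolding FF_def by blast
      have "\<beta> \<in> FF N I e hb 1" using L_F1[OF mi hyp e hb] q ab(2) by (auto simp: IdealE_def)
      then obtain k2 u2 where b: "\<beta> \<in> exps N" "k2 \<le> 1" "(mon u2 :: 'k mpoly) \<in> ideal_pow N I k2" "lk u2 e = 0"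
         "\<forall>i. (if i = e then k2 else 0) + lk u2 i + (1-k2) * lk hb i \<le> lk \<beta> i"
        unfolding FF_def by blast
      have xe: "x \<in> exps N" using x a(1) b(1) exps_add by blast
      show "x \<in> FF N I e hb (Suc j)"
      proof (cases "k2 = 0")
        case True
        have "\<forall>i. (if i = e then k1 else 0) + lk u1 i + (Suc j-k1) * lk hb i \<le> lk x i"
        proof
          fix i
          have "(if i = e then k1 else 0) + lk u1 i + (j-k1) * lk hb i \<le> lk \<alpha> i" using a(5) by blast
          moreover have "lk hb i \<le> lk \<beta> i" using b(5) True by (metis add_leE mult_1 diff_zero)
          moreover have "(Suc j-k1) * lk hb i = (j - k1) * lk hb i + lk hb i" using a(2)
            by (simp add: Suc_diff_le)
          ultimately show "(if i = e then k1 else 0) + lk u1 i + (Suc j-k1) * lk hb i \<le> lk x i"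
            by (simp add: x lookup_add)
        qed
        then show ?thesis unfolding FF_def using xe a(2-4) le_SucI by blast
      next
        case False
        then have k2: "k2 = 1" using b(2) by simp
        have u2I: "(mon u2 :: 'k mpoly) \<in> I" using b(3) k2 pow1[OF ii] by simp
        have "(mon (u1 + u2) :: 'k mpoly) \<in> ideal_pow N I (Suc k1)"
          using pow_prod[OF a(3) u2I] by (simp add: mon_mult)
        moreover have "lk (u1 + u2) e = 0" using a(4) b(4) by (simp add: lookup_add)
        moreover have "\<forall>i. (if i = e then Suc k1 else 0) + lk (u1 + u2) i + (Suc j - Suc k1) * lk hb i \<le> lk x i"
        proof
          fix i
          have "(if i = e then k1 else 0) + lk u1 i + (j-k1) * lk hb i \<le> lk \<alpha> i" using a(5) by blast
          moreover have "(if i = e then 1 else 0) + lk u2 i \<le> lk \<beta> i" using b(5) k2 by (metis add.right_neutral diff_self_eq_0 mult_0)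
          ultimately show "(if i = e then Suc k1 else 0) + lk (u1 + u2) i + (Suc j - Suc k1) * lk hb i \<le> lk x i"
            by (auto simp: x lookup_add split: if_splits)
        qed
        ultimately show ?thesis unfolding FF_def using xe a(2) by blast
      qed
    qed
  qed
  then show ?case unfolding ideal_pow.simps ideal_prod_def by (rule gen_min[OF FF_ideal])
qed

primrec rep :: "nat \<Rightarrow> (nat \<Rightarrow>\<^sub>0 nat) \<Rightarrow> (nat \<Rightarrow>\<^sub>0 nat)" where
  "rep 0 c = 0"
| "rep (Suc m) c = rep m c + c"

lemma lk_rep: "lk (rep m c) i = m * lk c i"
  by (induction m) (auto simp: lookup_add)

lemma powh: "(mon u :: 'k::field mpoly) \<in> ideal_pow N I k \<Longrightarrow> (mon hb :: 'k mpoly) \<in> I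
   \<Longrightarrow> (mon (u + rep m hb) :: 'k mpoly) \<in> ideal_pow N I (k + m)"
proof (induction m)
  case 0 then show ?case by simp
next
  case (Suc m)
  have "(mon (u + rep m hb) :: 'k mpoly) * mon hb \<in> ideal_pow N I (Suc (k + m))"
    by (rule pow_prod[OF Suc.IH[OF Suc.prems] Suc.prems(2)])
  then show ?case by (simp add: mon_mult add.assoc)
qed

lemma FF_contra:
  fixes I :: "'k::field mpoly set"
  assumes ii: "is_ideal N I" and hbI: "(mon hb :: 'k mpoly) \<in> I"
    and ge: "lk g e = 0" and he: "lk hb e = 0" and gx: "g \<in> exps N"
    and inF: "sg e t + g + hb \<in> FF N I e hb (Suc t)"
  shows "(mon g :: 'k mpoly) \<in> ideal_pow N I t"
proof -
  obtain k u where k: "k \<le> Suc t" and u: "(mon u :: 'k mpoly) \<in> ideal_pow N I k" "lk u e = 0"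
    and c: "\<forall>i. (if i = e then k else 0) + lk u i + (Suc t-k) * lk hb i \<le> lk (sg e t + g + hb) i"
    using inF unfolding FF_def by blast
  have "k \<le> t" using c[rule_format, of e] ge he u(2) by (simp add: lookup_add)
  then have sk: "Suc t - k = Suc (t - k)" by (simp add: Suc_diff_le)
  have "mon_dvd (u + rep (t-k) hb) g" unfolding mon_dvd_def
  proof
    fix i
    show "lk (u + rep (t - k) hb) i \<le> lk g i"
    proof (cases "i = e")
      case True then show ?thesis using u(2) he by (simp add: lookup_add lk_rep)
    next
      case False
      then show ?thesis using c[rule_format, of i] sk by (simp add: lookup_add lk_rep lookup_single when_def)
    qed
  qed
  moreover have "(mon (u + rep (t-k) hb) :: 'k mpoly) \<in> ideal_pow N I t"
    using powh[OF u(1) hbI, of "t-k"] \<open>k \<le> t\<close> by simp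
  ultimately show ?thesis using upward[OF ideal_pow_ideal[OF ii] _ gx] by blast
qed

lemma shift_lk: "lk (sg \<alpha> c * (p :: 'k::field mpoly)) (\<alpha> + \<beta>) = c * lk p \<beta>"
proof -
  have "sg \<alpha> c * p = (\<Sum>\<gamma>\<in>ks p. sg (\<alpha> + \<gamma>) (c * lk p \<gamma>))"
    by (subst poly_decomp[of p]) (simp add: sum_distrib_left mult_single)
  then have "lk (sg \<alpha> c * p) (\<alpha> + \<beta>) = (\<Sum>\<gamma>\<in>ks p. if \<gamma> = \<beta> then c * lk p \<gamma> else 0)"
    by (simp add: lookup_sum lookup_single when_def)
  also have "\<dots> = c * lk p \<beta>"
    by (simp add: in_keys_iff)
  finally show ?thesis .
qed

lemma add_eq_0_pm: "(x :: nat \<Rightarrow>\<^sub>0 nat) + y = 0 \<Longrightarrow> x = 0"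
  by (rule poly_mapping_eqI) (metis add_is_0 lookup_add lookup_zero)

lemma const_mult: "lk ((p :: 'k::field mpoly) * q) 0 = lk p 0 * lk q 0"
proof -
  define p' where "p' = p - sg 0 (lk p 0)"
  have pp: "p = sg 0 (lk p 0) + p'" by (simp add: p'_def)
  have "0 \<notin> ks p'" by (simp add: p'_def in_keys_iff lookup_minus)
  then have "0 \<notin> ks (p' * q)" using keys_mult[of p' q] add_eq_0_pm by force
  then have "lk (p' * q) 0 = 0" by (simp add: in_keys_iff)
  moreover have "lk (sg 0 (lk p 0) * q) (0 + 0) = lk p 0 * lk q 0" by (rule shift_lk)
  ultimately show ?thesis by (subst pp) (simp add: distrib_right lookup_add)
qed

lemma colon_ideal: "is_ideal N J \<Longrightarrow> c \<in> PR N \<Longrightarrow> is_ideal N {s \<in> PR N. s * c \<in> J}"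
  unfolding is_ideal_def
  by (auto simp: PR_add PR_mult PR_0 distrib_right mult.assoc)

lemma PR_minus: assumes "p \<in> PR N" "q \<in> PR N" shows "(p :: 'k::field mpoly) - q \<in> PR N"
proof -
  have "ks (p - q) \<subseteq> ks p \<union> ks q"
  proof
    fix x assume "x \<in> ks (p - q)"
    then have "lk p x \<noteq> lk q x" by (simp add: in_keys_iff lookup_minus)
    then show "x \<in> ks p \<union> ks q" by (auto simp: in_keys_iff)
  qed
  then show ?thesis using assms by (auto simp: PR_def)
qed

lemma Var_PR: "i \<in> {1..N} \<Longrightarrow> (Var i :: 'k::field mpoly) \<in> PR N"
  by (simp add: Var_mon PR_mon sg_exps)

lemma Var_pow: "(Var e :: 'k::field mpoly) ^ k = mon (sg e k)"
  by (induction k) (auto simp: mon_0 Var_mon mon_mult single_add[symmetric])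

lemma lemA:
  fixes I :: "'k::field mpoly set"
  assumes ii: "is_ideal N I" and e: "e \<in> {1..N}" and hb: "hb \<in> exps N"
  shows "p \<in> ideal_pow N I k \<Longrightarrow>
    Var e ^ k * p \<in> ideal_pow N (gen N ((\<lambda>u. Var e * u) ` I \<union> {mon hb})) k"
proof (induction k arbitrary: p)
  case 0 then show ?case by simp
next
  case (Suc k)
  let ?L = "gen N ((\<lambda>u. Var e * u) ` I \<union> {mon hb})"
  have VU: "Var e * u \<in> PR N" if "u \<in> I" for u
    using PR_mult[OF Var_PR[OF e] subsetD[OF ideal_PR[OF ii] that]] .
  have LPR: "(\<lambda>u. Var e * u) ` I \<union> {mon hb} \<subseteq> PR N"
    using VU PR_mon[OF hb] by blast
  have Li: "is_ideal N ?L" by (rule gen_ideal[OF LPR])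
  have VP: "(Var e :: 'k mpoly) ^ Suc k \<in> PR N" unfolding Var_pow by (rule PR_mon[OF sg_exps[OF e]])
  let ?C = "{s \<in> PR N. s * Var e ^ Suc k \<in> ideal_pow N ?L (Suc k)}"
  have "{p * q |p q. p \<in> ideal_pow N I k \<and> q \<in> I} \<subseteq> ?C"
  proof safe
    fix p q assume p: "p \<in> ideal_pow N I k" and q: "q \<in> I"
    show "p * q \<in> PR N"
      by (rule PR_mult[OF subsetD[OF ideal_PR[OF ideal_pow_ideal[OF ii]] p] subsetD[OF ideal_PR[OF ii] q]])
    have "Var e * q \<in> ?L" by (rule subsetD[OF gen_sub]) (use q in blast)
    then have "(Var e ^ k * p) * (Var e * q) \<in> ideal_pow N ?L (Suc k)"
      by (rule pow_prod[OF Suc.IH[OF p]])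
    then show "p * q * Var e ^ Suc k \<in> ideal_pow N ?L (Suc k)" by (simp add: ac_simps)
  qed
  then have gC: "gen N {p * q |p q. p \<in> ideal_pow N I k \<and> q \<in> I} \<subseteq> ?C"
    by (rule gen_min[OF colon_ideal[OF ideal_pow_ideal[OF Li] VP]])
  have eq: "ideal_pow N I (Suc k) = gen N {p * q |p q. p \<in> ideal_pow N I k \<and> q \<in> I}"
    by (simp add: ideal_prod_def)
  have "ideal_pow N I (Suc k) \<subseteq> ?C" by (subst eq) (rule gC)
  then have "p * Var e ^ Suc k \<in> ideal_pow N ?L (Suc k)" using Suc.prems by blast
  then show ?case by (simp only: mult.commute)
qed

lemma M_eq_Z: "gen N {Var i | i. i \<in> {1..N}} = {p \<in> PR N. lk (p :: 'k::field mpoly) 0 = 0}"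
proof
  let ?M = "gen N {Var i | i. i \<in> {1..N}} :: 'k mpoly set"
  let ?Z = "{p \<in> PR N. lk (p :: 'k::field mpoly) 0 = 0}"
  have Zi: "is_ideal N ?Z" unfolding is_ideal_def
    by (auto simp: PR_add PR_mult PR_0 lookup_add const_mult)
  have "sg i 1 \<noteq> (0 :: nat \<Rightarrow>\<^sub>0 nat)" for i
    by (metis lookup_single_eq lookup_zero one_neq_zero)
  then have "{Var i | i. i \<in> {1..N}} \<subseteq> ?Z"
    using Var_PR by (auto simp: Var_mon mon_def lookup_single when_def)
  then show "?M \<subseteq> ?Z" by (rule gen_min[OF Zi])
  have MPR: "{Var i | i. i \<in> {1..N}} \<subseteq> (PR N :: 'k mpoly set)" using Var_PR by blast
  have Mi: "is_ideal N ?M" by (rule gen_ideal[OF MPR])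
  show "?Z \<subseteq> ?M"
  proof
    fix p :: "'k mpoly" assume p: "p \<in> ?Z"
    show "p \<in> ?M"
    proof (rule ideal_from_keys[OF Mi], rule ballI)
      fix \<alpha> assume a: "\<alpha> \<in> ks p"
      then have ax: "\<alpha> \<in> exps N" using p by (auto simp: PR_def)
      have "\<alpha> \<noteq> 0" using a p by (auto simp: in_keys_iff)
      then obtain i where i: "lk \<alpha> i \<noteq> 0" using pm_ne[of \<alpha> 0] by auto
      then have "i \<in> ks \<alpha>" by (simp add: in_keys_iff)
      then have iN: "i \<in> {1..N}" using ax unfolding exps_def by blast
      have dv: "mon_dvd (sg i 1) \<alpha>" using i by (auto simp: mon_dvd_def lookup_single when_def)
      have eq: "(\<alpha> - sg i 1) + sg i 1 = \<alpha>" using dvd_decomp[OF dv] by simp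
      have "(mon \<alpha> :: 'k mpoly) = mon (\<alpha> - sg i 1) * Var i"
        by (simp only: mon_mult Var_mon eq)
      moreover have "(Var i :: 'k mpoly) \<in> ?M" by (rule subsetD[OF gen_sub]) (use iN in blast)
      ultimately show "(mon \<alpha> :: 'k mpoly) \<in> ?M"
        using ideal_multL[OF Mi PR_mon[OF minus_exps[OF ax]]] by simp
    qed
  qed
qed

theorem proposition3p1:
  fixes n t :: nat and I :: "('k::field) mpoly set" and a b :: "nat \<Rightarrow>\<^sub>0 nat"
  assumes "monomial_ideal (n+1) I"
    and "\<forall>c. mon c \<in> (mingens (n+1) I :: 'k mpoly set) \<longrightarrow> mon_coprime c (Poly_Mapping.single (n+1) 1)"
    and "a \<in> exps (n+1)" and "a \<noteq> 0"
    and "(mon b :: 'k mpoly) \<in> mingens (n+1) I"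
    and "mon_coprime (a + b) (Poly_Mapping.single (n+1) 1)"
    and "t \<ge> 1"
    and "gen (n+1) {Var i | i. i \<in> {1..n}} \<in> Ass (n+1) (ideal_pow (n+1) I t)"
  shows "gen (n+1) {Var i | i. i \<in> {1..n+1}}
           \<in> Ass (n+1) (ideal_pow (n+1)
                 (gen (n+1) ((\<lambda>u. Var (n+1) * u) ` I \<union> {mon (a + b)})) (t+1))"
proof -
  define N where "N = n + 1"
  define e where "e = n + 1"
  note mi = assms(1)[folded N_def]
  have hyp: "\<forall>c. mon c \<in> (mingens N I :: 'k mpoly set) \<longrightarrow> mon_coprime c (sg e 1)"
    using assms(2) by (simp add: N_def e_def)
  have ii: "is_ideal N I" using mi by (simp add: monomial_ideal_def)
  have eN: "e \<in> {1..N}" by (simp add: e_def N_def)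
  let ?It = "ideal_pow N I t"
  have Iti: "is_ideal N ?It" by (rule ideal_pow_ideal[OF ii])
  obtain r0 where r0: "r0 \<in> PR N" and P0: "gen N {Var i | i. i \<in> {1..n}} = {s \<in> PR N. s * r0 \<in> ?It}"
    and pr: "prime_ideal N (gen N {Var i | i. i \<in> {1..n}} :: 'k mpoly set)"
    using assms(8) unfolding Ass_def N_def by blast
  have "(1 :: 'k mpoly) \<notin> gen N {Var i | i. i \<in> {1..n}}"
  proof
    assume 1: "(1 :: 'k mpoly) \<in> gen N {Var i | i. i \<in> {1..n}}"
    have Pi: "is_ideal N (gen N {Var i | i. i \<in> {1..n}} :: 'k mpoly set)"
      using pr unfolding prime_ideal_def by blast
    have "PR N \<subseteq> (gen N {Var i | i. i \<in> {1..n}} :: 'k mpoly set)"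
    proof
      fix s :: "'k mpoly" assume "s \<in> PR N"
      then have "1 * s \<in> gen N {Var i | i. i \<in> {1..n}}" by (rule ideal_multR[OF Pi _ 1])
      then show "s \<in> gen N {Var i | i. i \<in> {1..n}}" by simp
    qed
    then show False using pr unfolding prime_ideal_def is_ideal_def by blast
  qed
  then have r0n: "r0 \<notin> ?It" using P0 PR_1 by auto
  have Vr0: "Var i * r0 \<in> ?It" if "i \<in> {1..n}" for i
  proof -
    have "Var i \<in> gen N {Var i | i. i \<in> {1..n}}" by (rule subsetD[OF gen_sub]) (use that in blast)
    then show ?thesis using P0 by auto
  qed
  obtain \<gamma> where g: "\<gamma> \<in> ks r0" "(mon \<gamma> :: 'k mpoly) \<notin> ?It"
    using ideal_from_keys[OF Iti, of r0] r0n by blast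
  have gx: "\<gamma> \<in> exps N" using g r0 by (auto simp: PR_def)
  define g' where "g' = zz e \<gamma>"
  have g'x: "g' \<in> exps N" by (simp add: g'_def zz_exps[OF gx])
  have g'e: "lk g' e = 0" by (simp add: g'_def lk_zz)
  have g'n: "(mon g' :: 'k mpoly) \<notin> ?It"
  proof
    assume "(mon g' :: 'k mpoly) \<in> ?It"
    moreover have "mon_dvd g' \<gamma>" by (auto simp: g'_def mon_dvd_def lk_zz)
    ultimately show False using upward[OF Iti _ gx] g by blast
  qed
  have Vw: "(mon (sg i 1 + g') :: 'k mpoly) \<in> ?It" if i: "i \<in> {1..n}" for i
  proof -
    have "lk (Var i * r0) (sg i 1 + \<gamma>) \<noteq> 0"
      using g(1) by (simp add: Var_mon mon_def shift_lk in_keys_iff)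
    then have "sg i 1 + \<gamma> \<in> ks (Var i * r0)" by (simp add: in_keys_iff)
    then obtain u where u: "(mon u :: 'k mpoly) \<in> ?It" "lk u e = 0" "mon_dvd u (sg i 1 + \<gamma>)"
      using pow_S[OF mi hyp, of t] Vr0[OF i] by (auto simp: IdealE_def)
    have "i \<noteq> e" using i by (simp add: e_def)
    then have "mon_dvd u (sg i 1 + g')" using u(2,3)
      by (auto simp: mon_dvd_def g'_def lookup_add lk_zz lookup_single when_def)
    moreover have "sg i 1 + g' \<in> exps N" using i g'x exps_add sg_exps by (simp add: N_def exps_add sg_exps)
    ultimately show ?thesis using upward[OF Iti u(1)] by blast
  qed
  obtain b0 where b0: "(mon b :: 'k mpoly) = mon b0" "b0 \<in> exps N" "(mon b0 :: 'k mpoly) \<in> I"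
    using assms(5) unfolding mingens_def N_def by blast
  have bx: "b \<in> exps N" and bI: "(mon b :: 'k mpoly) \<in> I" using b0 mon_inj[OF b0(1)] by auto
  have ax: "a \<in> exps N" using assms(3) by (simp add: N_def)
  have "min (lk (a + b) e) 1 = 0" using assms(6) unfolding mon_coprime_def e_def
    by (metis lookup_single_eq)
  then have abe: "lk (a + b) e = 0" by (simp add: min_def split: if_splits)
  then have ae: "lk a e = 0" by (simp add: lookup_add)
  obtain j where j: "lk a j \<noteq> 0" using pm_ne[OF assms(4)] by auto
  then have "j \<in> ks a" by (simp add: in_keys_iff)
  then have "j \<in> {1..N}" using ax unfolding exps_def by blast
  moreover have "j \<noteq> e" using j ae by auto
  ultimately have jn: "j \<in> {1..n}" by (auto simp: N_def e_def)
  have dvj: "mon_dvd (sg j 1) a" using j by (auto simp: mon_dvd_def lookup_single when_def)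
  have aw: "(mon a :: 'k mpoly) * mon g' \<in> ?It"
  proof -
    have eq: "(a - sg j 1) + (sg j 1 + g') = a + g'" using dvd_decomp[OF dvj] by (metis add.assoc)
    have "(mon a :: 'k mpoly) * mon g' = mon (a - sg j 1) * mon (sg j 1 + g')"
      by (simp only: mon_mult eq)
    then show ?thesis using ideal_multL[OF Iti PR_mon[OF minus_exps[OF ax]] Vw[OF jn]] by simp
  qed
  define hb where "hb = a + b"
  have hbx: "hb \<in> exps N" using ax bx exps_add hb_def by blast
  have hbI: "(mon hb :: 'k mpoly) \<in> I"
    using ideal_multL[OF ii PR_mon[OF ax] bI] by (simp add: mon_mult hb_def)
  let ?L = "gen N ((\<lambda>u. Var e * u) ` I \<union> {mon hb}) :: 'k mpoly set"
  let ?Lt = "ideal_pow N ?L (Suc t)"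
  have VU: "Var e * u \<in> PR N" if "u \<in> I" for u
    using PR_mult[OF Var_PR[OF eN] subsetD[OF ideal_PR[OF ii] that]] .
  have LPR: "(\<lambda>u. Var e * u) ` I \<union> {mon hb} \<subseteq> (PR N :: 'k mpoly set)"
    using VU PR_mon[OF hbx] by blast
  have Li: "is_ideal N ?L" by (rule gen_ideal[OF LPR])
  have Lti: "is_ideal N ?Lt" by (rule ideal_pow_ideal[OF Li])
  have hL: "(mon hb :: 'k mpoly) \<in> ?L" by (rule subsetD[OF gen_sub]) blast
  define r :: "'k mpoly" where "r = Var e ^ t * mon g' * mon hb"
  have r_mon: "r = mon (sg e t + g' + hb)" by (simp add: r_def Var_pow mon_mult)
  have rx: "r \<in> PR N" unfolding r_mon using exps_add sg_exps[OF eN] g'x hbx PR_mon by blast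
  have rn: "r \<notin> ?Lt"
  proof
    assume "r \<in> ?Lt"
    then have "sg e t + g' + hb \<in> FF N I e hb (Suc t)"
      using L_pow_F[OF mi hyp eN hbx, of "Suc t"] by (auto simp: IdealE_def r_mon)
    then have "(mon g' :: 'k mpoly) \<in> ?It"
      using FF_contra[OF ii hbI g'e _ g'x] abe by (simp add: hb_def)
    then show False using g'n by blast
  qed
  define C where "C = {s \<in> PR N. s * r \<in> ?Lt}"
  have Ci: "is_ideal N C" unfolding C_def by (rule colon_ideal[OF Lti rx])
  have VC: "Var i \<in> C" if i: "i \<in> {1..N}" for i
  proof (cases "i = e")
    case True
    have "(mon a * mon g') * mon b \<in> ideal_pow N I (Suc t)" by (rule pow_prod[OF aw bI])
    then have m1: "Var e ^ Suc t * ((mon a * mon g') * mon b) \<in> ?Lt"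
      by (rule lemA[OF ii eN hbx])
    have e1: "Var e ^ Suc t * ((mon a * mon g') * mon b) = Var e * r"
      by (simp add: r_def hb_def mon_mult[symmetric] ac_simps)
    have "Var e * r \<in> ?Lt" using m1 unfolding e1 .
    then show ?thesis using True Var_PR[OF eN] unfolding C_def by blast
  next
    case False
    then have i': "i \<in> {1..n}" using i by (auto simp: N_def e_def)
    have "Var e ^ t * (mon (sg i 1 + g') :: 'k mpoly) \<in> ideal_pow N ?L t"
      using lemA[OF ii eN hbx Vw[OF i']] .
    then have m1: "(Var e ^ t * (mon (sg i 1 + g') :: 'k mpoly)) * mon hb \<in> ?Lt"
      by (rule pow_prod[OF _ hL])
    have e1: "(Var e ^ t * (mon (sg i 1 + g') :: 'k mpoly)) * mon hb = Var i * r"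
      by (simp add: r_def Var_mon mon_mult[symmetric] ac_simps)
    have "Var i * r \<in> ?Lt" using m1 unfolding e1 .
    then show ?thesis using Var_PR[OF i] unfolding C_def by blast
  qed
  let ?M = "gen N {Var i | i. i \<in> {1..N}} :: 'k mpoly set"
  have MC: "?M \<subseteq> C" using VC by (intro gen_min[OF Ci]) blast
  have MZ: "?M = {p \<in> PR N. lk p 0 = 0}" by (rule M_eq_Z)
  have CM: "C \<subseteq> ?M"
  proof
    fix s assume s: "s \<in> C"
    have sP: "s \<in> PR N" using s by (simp add: C_def)
    show "s \<in> ?M"
    proof (rule ccontr)
      assume "s \<notin> ?M"
      then have c0: "lk s 0 \<noteq> 0" using MZ sP by blast
      define s' where "s' = s - sg 0 (lk s 0)"
      have "s' \<in> PR N" unfolding s'_def by (rule PR_minus[OF sP PR_const])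
      moreover have "lk s' 0 = 0" by (simp add: s'_def lookup_minus)
      ultimately have "s' \<in> ?M" unfolding MZ by blast
      then have s'C: "s' \<in> C" using MC by blast
      have "sg 0 (-1) * s' \<in> C" by (rule ideal_multL[OF Ci PR_const s'C])
      then have "s + sg 0 (-1) * s' \<in> C" using ideal_add[OF Ci s] by blast
      moreover have "s + sg 0 (-1) * s' = sg 0 (lk s 0)"
        by (simp add: s'_def single_uminus)
      ultimately have "sg 0 (inverse (lk s 0)) * sg 0 (lk s 0) \<in> C"
        using ideal_multL[OF Ci PR_const] by metis
      then have "(1 :: 'k mpoly) \<in> C" using c0 by (simp add: mult_single)
      then show False using rn by (simp add: C_def)
    qed
  qed
  have "prime_ideal N ?M"
    unfolding prime_ideal_def
  proof (intro conjI ballI impI)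
    show "is_ideal N ?M" using Var_PR by (intro gen_ideal) blast
    show "?M \<noteq> PR N" using MZ PR_1 by (metis (mono_tags, lifting) lookup_one_zero mem_Collect_eq one_neq_zero)
  next
    fix x y :: "'k mpoly" assume "x \<in> PR N" "y \<in> PR N" "x * y \<in> ?M"
    then show "x \<in> ?M \<or> y \<in> ?M" unfolding MZ by (simp add: const_mult)
  qed
  then have "?M \<in> Ass N ?Lt" unfolding Ass_def using rx CM MC C_def by blast
  then show ?thesis by (simp add: N_def e_def hb_def)
qed

end
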